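(* Let $(x_n,y_n)_{n=1}^N$ be labeled points with $x_n$ in a bounded subset of $\mathbb{H}^{d}$ and $y_n\in\{-1,1\}$, and assume the point set is linearly separable with margin $\varepsilon>0$, i.e. there is $w^*\in\mathbb{R}^{d+1}$ with $[w^*,w^*]=-C_{\mathbb H}$ and $y_n\,\mathrm{asinh}([w^*,x_n])\ge\varepsilon$ for all $n$. Consider the hyperbolic perceptron: start with $w^0=0\in\mathbb{R}^{d+1}$, cycle through $n=1,\dots,N,1,\dots$, and whenever $\mathrm{sgn}([w^k,x_n])\ne y_n$ update $w^{k+1}=w^k+y_nHx_n$. Then this perceptron converges in $O\big(1/\sinh^2(\varepsilon)\big)$ steps.
   Context: $\mathbb{H}^{d}=\{x\in\mathbb{R}^{d+1}:[x,x]=C_{\mathbb H}^{-1},x_1>0\}$ is the Lorentz ('Loid) model of hyperbolic space with curvature $C_{\mathbb H}<0$, where $[u,v]=u^\top Hv$ and $H=\mathrm{diag}(-1,1,\dots,1)\in\mathbb{R}^{(d+1)\times(d+1)}$. Convergence means that after the stated number of updates all points are correctly classified by $x\mapsto\mathrm{sgn}([w^k,x])$. *)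

theory Defs
  imports Complex_Main
begin

text \<open>Vectors in R^(d+1) are represented as functions nat => real; only the
coordinates 0..d are relevant (coordinate 0 is the time-like coordinate x_1).\<close>

definition lorentz :: "nat \<Rightarrow> (nat \<Rightarrow> real) \<Rightarrow> (nat \<Rightarrow> real) \<Rightarrow> real" where
  "lorentz d u v = - u 0 * v 0 + (\<Sum>i\<in>{1..d}. u i * v i)"

definition Hmul :: "nat \<Rightarrow> (nat \<Rightarrow> real) \<Rightarrow> (nat \<Rightarrow> real)" where
  "Hmul d x = (\<lambda>i. if i = 0 then - x 0 else if i \<le> d then x i else 0)"

definition hyperboloid :: "nat \<Rightarrow> real \<Rightarrow> (nat \<Rightarrow> real) set" where
  "hyperboloid d C = {x. lorentz d x x = 1 / C \<and> x 0 > 0}"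

definition eucl_sq :: "nat \<Rightarrow> (nat \<Rightarrow> real) \<Rightarrow> real" where
  "eucl_sq d x = (\<Sum>i\<le>d. (x i)^2)"

text \<open>Hyperbolic perceptron: w t is the weight vector before the t-th examination;
at examination t the point with index t mod N is examined.\<close>
fun hperc :: "nat \<Rightarrow> nat \<Rightarrow> (nat \<Rightarrow> nat \<Rightarrow> real) \<Rightarrow> (nat \<Rightarrow> real) \<Rightarrow> nat \<Rightarrow> (nat \<Rightarrow> real)" where
  "hperc d N x y 0 = (\<lambda>_. 0)"
| "hperc d N x y (Suc t) =
     (let w = hperc d N x y t; n = t mod N in
      if sgn (lorentz d w (x n)) \<noteq> y n then (\<lambda>i. w i + y n * Hmul d (x n) i) else w)"

definition hperc_mistake :: "nat \<Rightarrow> nat \<Rightarrow> (nat \<Rightarrow> nat \<Rightarrow> real) \<Rightarrow> (nat \<Rightarrow> real) \<Rightarrow> nat \<Rightarrow> bool" where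
  "hperc_mistake d N x y t \<longleftrightarrow>
     sgn (lorentz d (hperc d N x y t) (x (t mod N))) \<noteq> y (t mod N)"

end

theory Submission
  imports Defs "HOL-Analysis.Analysis"
begin

lemma sum_split0: fixes d :: nat shows "(\<Sum>i\<le>d. f i) = f 0 + (\<Sum>i\<in>{1..d}. f i :: real)"
proof -
  have "{..d} = insert 0 {1..d}" by auto
  then show ?thesis by simp
qed

lemma margin_lemma:
  fixes y a e :: real
  assumes "y \<in> {-1, 1}" "y * arsinh a \<ge> e"
  shows "y * a \<ge> sinh e"
proof (cases "y = 1")
  case True
  then have "arsinh a \<ge> e" using assms by simp
  then have "sinh e \<le> a" by (metis sinh_arsinh_real sinh_real_le_iff)
  then show ?thesis using True by simp
next
  case False
  then have y: "y = -1" using assms by simp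
  then have "arsinh (-a) \<ge> e" using assms by simp
  then have "sinh e \<le> -a" by (metis sinh_arsinh_real sinh_real_le_iff)
  then show ?thesis using y by simp
qed

lemma mistake_le:
  fixes y a :: real
  assumes "y \<in> {-1, 1}" "sgn a \<noteq> y"
  shows "y * a \<le> 0"
  using assms by (auto simp: sgn_if split: if_splits)

definition Pf :: "nat \<Rightarrow> (nat \<Rightarrow> real) \<Rightarrow> (nat \<Rightarrow> real) \<Rightarrow> real" where
  "Pf d u w = (\<Sum>i\<le>d. u i * w i)"

lemma P_upd: "Pf d u (\<lambda>i. w i + c * Hmul d x i) = Pf d u w + c * lorentz d u x"
proof -
  have "Pf d u (\<lambda>i. w i + c * Hmul d x i) = Pf d u w + c * (\<Sum>i\<le>d. u i * Hmul d x i)"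
    unfolding Pf_def by (simp add: algebra_simps sum.distrib sum_distrib_left)
  moreover have "(\<Sum>i\<le>d. u i * Hmul d x i) = lorentz d u x"
    unfolding sum_split0 lorentz_def Hmul_def by (auto intro!: sum.cong)
  ultimately show ?thesis by simp
qed

lemma Q_upd:
  assumes "c\<^sup>2 = 1"
  shows "eucl_sq d (\<lambda>i. w i + c * Hmul d x i) = eucl_sq d w + 2 * c * lorentz d w x + eucl_sq d x"
proof -
  have "eucl_sq d (\<lambda>i. w i + c * Hmul d x i) =
     eucl_sq d w + 2 * c * (\<Sum>i\<le>d. w i * Hmul d x i) + c\<^sup>2 * (\<Sum>i\<le>d. (Hmul d x i)\<^sup>2)"
    unfolding eucl_sq_def by (simp add: power2_eq_square algebra_simps sum.distrib sum_distrib_left)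
  moreover have "(\<Sum>i\<le>d. w i * Hmul d x i) = lorentz d w x"
    unfolding sum_split0 lorentz_def Hmul_def by (auto intro!: sum.cong)
  moreover have "(\<Sum>i\<le>d. (Hmul d x i)\<^sup>2) = eucl_sq d x"
    unfolding eucl_sq_def Hmul_def by (auto intro!: sum.cong)
  ultimately show ?thesis using assms by simp
qed

lemma card_step:
  "card {s. s < Suc t \<and> M s} = card {s. s < t \<and> M s} + (if M t then 1 else 0)"
proof -
  have fin: "finite {s. s < t \<and> M s}" by simp
  show ?thesis
  proof (cases "M t")
    case True
    then have "{s. s < Suc t \<and> M s} = insert t {s. s < t \<and> M s}" by auto
    then show ?thesis using True fin by simp
  next
    case False
    then have "{s. s < Suc t \<and> M s} = {s. s < t \<and> M s}" using less_Suc_eq by auto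
    then show ?thesis using False by simp
  qed
qed

theorem theorem4:
  fixes d :: nat and C R :: real and wstar :: "nat \<Rightarrow> real"
  assumes "C < 0"
    and "lorentz d wstar wstar = - C"
  shows "\<exists>K::real. \<forall>(N::nat) (x::nat \<Rightarrow> nat \<Rightarrow> real) (y::nat \<Rightarrow> real) (\<epsilon>::real).
     N \<ge> 1 \<longrightarrow> \<epsilon> > 0 \<longrightarrow>
     (\<forall>n<N. x n \<in> hyperboloid d C \<and> eucl_sq d (x n) \<le> R\<^sup>2) \<longrightarrow>
     (\<forall>n<N. y n \<in> {-1, 1}) \<longrightarrow>
     (\<forall>n<N. y n * arsinh (lorentz d wstar (x n)) \<ge> \<epsilon>) \<longrightarrow>
     (\<exists>T. (\<forall>n<N. sgn (lorentz d (hperc d N x y T) (x n)) = y n) \<and>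
          real (card {t. t < T \<and> hperc_mistake d N x y t}) \<le> K / (sinh \<epsilon>)\<^sup>2)"
proof (rule exI[of _ "eucl_sq d wstar * R\<^sup>2"], intro allI impI)
  fix N :: nat and x :: "nat \<Rightarrow> nat \<Rightarrow> real" and y :: "nat \<Rightarrow> real" and e :: real
  assume N: "N \<ge> 1" and e: "e > 0"
    and xb: "\<forall>n<N. x n \<in> hyperboloid d C \<and> eucl_sq d (x n) \<le> R\<^sup>2"
    and yv: "\<forall>n<N. y n \<in> {-1, 1}"
    and marg: "\<forall>n<N. y n * arsinh (lorentz d wstar (x n)) \<ge> e"
  define s where "s = sinh e"
  have s0: "s > 0" using e by (simp add: s_def)
  define w where "w = hperc d N x y"
  define M where "M = hperc_mistake d N x y"
  define m where "m t = card {s. s < t \<and> M s}" for t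
  define K where "K = eucl_sq d wstar * R\<^sup>2"
  have inv: "Pf d wstar (w t) \<ge> real (m t) * s \<and> eucl_sq d (w t) \<le> real (m t) * R\<^sup>2" for t
  proof (induction t)
    case 0
    then show ?case by (simp add: w_def m_def Pf_def eucl_sq_def)
  next
    case (Suc t)
    define n where "n = t mod N"
    have nN: "n < N" using N by (simp add: n_def)
    have yn: "y n \<in> {-1,1}" using yv nN by auto
    have mS: "m (Suc t) = m t + (if M t then 1 else 0)" unfolding m_def by (rule card_step)
    show ?case
    proof (cases "M t")
      case True
      have ws: "w (Suc t) = (\<lambda>i. w t i + y n * Hmul d (x n) i)"
        using True by (simp add: w_def M_def hperc_mistake_def n_def Let_def)
      have c2: "(y n)\<^sup>2 = 1" using yn by auto
      have a1: "y n * lorentz d wstar (x n) \<ge> s"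
        unfolding s_def by (rule margin_lemma[OF yn]) (use marg nN in auto)
      have a2: "y n * lorentz d (w t) (x n) \<le> 0"
        by (rule mistake_le[OF yn]) (use True in \<open>simp add: M_def hperc_mistake_def w_def n_def\<close>)
      have a3: "eucl_sq d (x n) \<le> R\<^sup>2" using xb nN by auto
      have m1: "real (m (Suc t)) = real (m t) + 1" using mS True by simp
      have p1: "Pf d wstar (w (Suc t)) = Pf d wstar (w t) + y n * lorentz d wstar (x n)"
        unfolding ws by (rule P_upd)
      have q1: "eucl_sq d (w (Suc t)) = eucl_sq d (w t) + 2 * (y n * lorentz d (w t) (x n)) + eucl_sq d (x n)"
        unfolding ws Q_upd[OF c2] by simp
      have "Pf d wstar (w (Suc t)) \<ge> real (m (Suc t)) * s"
        using p1 m1 Suc.IH a1 by (simp add: distrib_right)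
      moreover have "eucl_sq d (w (Suc t)) \<le> real (m (Suc t)) * R\<^sup>2"
        using q1 m1 Suc.IH a2 a3 by (simp add: distrib_right)
      ultimately show ?thesis by blast
    next
      case False
      have ws: "w (Suc t) = w t"
        using False by (simp add: w_def M_def hperc_mistake_def n_def Let_def)
      show ?thesis using Suc.IH False mS ws by simp
    qed
  qed
  have bound: "real (m t) * s\<^sup>2 \<le> K" for t
  proof (cases "m t = 0")
    case True
    then show ?thesis by (simp add: K_def eucl_sq_def sum_nonneg)
  next
    case False
    have "(real (m t) * s)\<^sup>2 \<le> (Pf d wstar (w t))\<^sup>2"
      using inv[of t] s0 by (intro power_mono) auto
    also have "\<dots> \<le> eucl_sq d wstar * eucl_sq d (w t)"
      unfolding Pf_def eucl_sq_def by (rule Cauchy_Schwarz_ineq_sum)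
    also have "\<dots> \<le> eucl_sq d wstar * (real (m t) * R\<^sup>2)"
      using inv[of t] by (intro mult_left_mono) (auto simp: eucl_sq_def sum_nonneg)
    finally have "real (m t) * (real (m t) * s\<^sup>2) \<le> real (m t) * K"
      by (simp add: K_def power2_eq_square algebra_simps)
    then show ?thesis using False by simp
  qed
  have mb: "real (m t) \<le> K / s\<^sup>2" for t
    using bound[of t] s0 by (simp add: field_simps)
  have mono_m: "m a \<le> m b" if "a \<le> b" for a b
    unfolding m_def by (rule card_mono) (use that in auto)
  define V where "V = range m"
  have finV: "finite V"
  proof -
    have "m t \<le> nat \<lceil>K / s\<^sup>2\<rceil>" for t
    proof -
      have "real (m t) \<le> real_of_int \<lceil>K / s\<^sup>2\<rceil>" using mb[of t] le_of_int_ceiling[of "K/s^2"] by linarith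
      then have "int (m t) \<le> \<lceil>K / s\<^sup>2\<rceil>" by linarith
      then show ?thesis by (simp add: le_nat_iff)
    qed
    then have "V \<subseteq> {..nat \<lceil>K / s\<^sup>2\<rceil>}"
      unfolding V_def by auto
    then show ?thesis by (rule finite_subset) simp
  qed
  obtain T where T: "m T = Max V"
    using Max_in[OF finV] by (auto simp: V_def)
  have mT: "m t = m T" if "t \<ge> T" for t
    using mono_m[OF that] Max_ge[OF finV, of "m t"] T by (auto simp: V_def)
  have noM: "\<not> M t" if "t \<ge> T" for t
  proof
    assume "M t"
    then have "m (Suc t) = m t + 1" unfolding m_def by (simp add: card_step)
    then show False using mT[of t] mT[of "Suc t"] that by simp
  qed
  have wc: "w (T + k) = w T" for k
  proof (induction k)
    case (Suc k)
    have "\<not> M (T + k)" by (rule noM) simp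
    then show ?case using Suc.IH
      by (simp add: w_def M_def hperc_mistake_def Let_def)
  qed simp
  show "\<exists>T. (\<forall>n<N. sgn (lorentz d (hperc d N x y T) (x n)) = y n) \<and>
          real (card {t. t < T \<and> hperc_mistake d N x y t}) \<le> eucl_sq d wstar * R\<^sup>2 / (sinh e)\<^sup>2"
  proof (intro exI conjI allI impI)
    fix n assume nN: "n < N"
    define t where "t = N * T + n"
    have tT: "t \<ge> T" 
    proof -
      have "1 * T \<le> N * T" using N by (rule mult_le_mono1)
      then have "T \<le> N * T" by (simp only: mult_1)
      then show ?thesis unfolding t_def by (rule trans_le_add1)
    qed
    have tm: "t mod N = n" using nN by (simp add: t_def)
    have wt: "w t = w T" using wc[of "t - T"] tT by simp
    show "sgn (lorentz d (hperc d N x y T) (x n)) = y n"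
      using noM[OF tT] wt tm by (simp add: M_def hperc_mistake_def w_def)
  next
    show "real (card {t. t < T \<and> hperc_mistake d N x y t}) \<le> eucl_sq d wstar * R\<^sup>2 / (sinh e)\<^sup>2"
      using mb[of T] by (simp only: m_def M_def K_def s_def)
  qed
qed

end
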